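(* For every $n\ge 2$ there exists an update sequence of width $3$ in which $n$ points arrive on which every deterministic strict online embedding into HSTs has distortion at least $2^{n-2}$.
   Context: For $\mu\ge1$, a $\mu$-HST is the metric on the leaves of a rooted tree with node weights $\varphi\ge0$ ($\varphi(v)=0$ iff $v$ is a leaf, $\varphi(v)\le\varphi(u)/\mu$ when $v$ is a child of $u$), leaf distance $\varphi(\mathrm{lca}(u,v))$; "HSTs" is the family of such metrics. An update sequence on a metric $(X,d)$ is a sequence $(v_t,o_t)\in X\times\{+,-\}$ ($v_t$ arrives if $o_t=+$, leaves if $o_t=-$) with alive sets $L_0=\varnothing$, $L_t=L_{t-1}\cup\{v_t\}$ or $L_{t-1}\setminus\{v_t\}$; its width is $\max_t|L_t|$. A deterministic strict online embedding into HSTs outputs after $\sigma_t$ (depending only on $\sigma_1,\dots,\sigma_t$, the sequence being possibly chosen adaptively against the deterministic embedding) an HST metric $d_t$ on $L_t$ with $d_t(u,v)=d_{t-1}(u,v)$ for all $u,v\in L_{t-1}\cap L_t$. Its distortion is the least $\lambda$ for which there is $c>0$ with $d(u,v)\le c\,d_t(u,v)\le\lambda d(u,v)$ for all $t$ and $u,v\in L_t$. *)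

theory Defs
  imports Main "HOL-Library.Extended_Real"
begin

definition is_metric :: "('a \<Rightarrow> 'a \<Rightarrow> real) \<Rightarrow> bool" where
  "is_metric d \<longleftrightarrow>
     (\<forall>x y. d x y \<ge> 0) \<and> (\<forall>x y. d x y = 0 \<longleftrightarrow> x = y) \<and>
     (\<forall>x y. d x y = d y x) \<and> (\<forall>x y z. d x z \<le> d x y + d y z)"

definition rooted_tree :: "nat set \<Rightarrow> nat \<Rightarrow> (nat \<Rightarrow> nat) \<Rightarrow> bool" where
  "rooted_tree V r par \<longleftrightarrow> finite V \<and> r \<in> V \<and> par r = r \<and>
     (\<forall>v\<in>V. par v \<in> V) \<and> (\<forall>v\<in>V. \<exists>k. (par ^^ k) v = r)"

definition tree_anc :: "(nat \<Rightarrow> nat) \<Rightarrow> nat \<Rightarrow> nat \<Rightarrow> bool" where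
  "tree_anc par u v \<longleftrightarrow> (\<exists>k. (par ^^ k) v = u)"

definition tree_child :: "nat set \<Rightarrow> nat \<Rightarrow> (nat \<Rightarrow> nat) \<Rightarrow> nat \<Rightarrow> nat \<Rightarrow> bool" where
  "tree_child V r par w u \<longleftrightarrow> w \<in> V \<and> w \<noteq> r \<and> par w = u"

definition tree_leaf :: "nat set \<Rightarrow> nat \<Rightarrow> (nat \<Rightarrow> nat) \<Rightarrow> nat \<Rightarrow> bool" where
  "tree_leaf V r par v \<longleftrightarrow> v \<in> V \<and> \<not> (\<exists>w. tree_child V r par w v)"

definition is_lca :: "(nat \<Rightarrow> nat) \<Rightarrow> nat \<Rightarrow> nat \<Rightarrow> nat \<Rightarrow> bool" where
  "is_lca par a b w \<longleftrightarrow> tree_anc par w a \<and> tree_anc par w b \<and>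
     (\<forall>w'. tree_anc par w' a \<and> tree_anc par w' b \<longrightarrow> tree_anc par w' w)"

definition is_mu_HST_metric :: "real \<Rightarrow> 'a set \<Rightarrow> ('a \<Rightarrow> 'a \<Rightarrow> real) \<Rightarrow> bool" where
  "is_mu_HST_metric \<mu> L \<delta> \<longleftrightarrow> L = {} \<or>
    (\<exists>V r par (\<phi>::nat \<Rightarrow> real) (leaf::'a \<Rightarrow> nat).
       rooted_tree V r par \<and>
       bij_betw leaf L {v. tree_leaf V r par v} \<and>
       (\<forall>v\<in>V. \<phi> v \<ge> 0) \<and>
       (\<forall>v\<in>V. \<phi> v = 0 \<longleftrightarrow> tree_leaf V r par v) \<and>
       (\<forall>u w. tree_child V r par w u \<longrightarrow> \<phi> w \<le> \<phi> u / \<mu>) \<and>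
       (\<forall>x\<in>L. \<forall>y\<in>L. \<exists>w. is_lca par (leaf x) (leaf y) w \<and> \<delta> x y = \<phi> w))"

definition is_HST_metric :: "'a set \<Rightarrow> ('a \<Rightarrow> 'a \<Rightarrow> real) \<Rightarrow> bool" where
  "is_HST_metric L \<delta> \<longleftrightarrow> (\<exists>\<mu>\<ge>1. is_mu_HST_metric \<mu> L \<delta>)"

text \<open>An update is a pair (v, o) with o = True for arrival (+), False for departure (-).\<close>

definition alive :: "('a \<times> bool) list \<Rightarrow> 'a set" where
  "alive \<sigma> = foldl (\<lambda>L (v, arr). if arr then insert v L else L - {v}) {} \<sigma>"

definition width :: "('a \<times> bool) list \<Rightarrow> nat" where
  "width \<sigma> = Max {card (alive (take t \<sigma>)) | t. t \<le> length \<sigma>}"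

definition n_points_arrive :: "('a \<times> bool) list \<Rightarrow> nat \<Rightarrow> bool" where
  "n_points_arrive \<sigma> n \<longleftrightarrow>
     distinct (map fst (filter snd \<sigma>)) \<and> length (filter snd \<sigma>) = n \<and>
     (\<forall>t < length \<sigma>. \<not> snd (\<sigma> ! t) \<longrightarrow> fst (\<sigma> ! t) \<in> alive (take t \<sigma>))"

text \<open>A deterministic online algorithm maps the prefix sigma_1..sigma_t to the output
  metric d_t; it must output an HST metric on L_t and never change distances between
  points that stay alive.\<close>
definition strict_online_HST_embedding ::
  "(('a \<times> bool) list \<Rightarrow> 'a \<Rightarrow> 'a \<Rightarrow> real) \<Rightarrow> bool" where
  "strict_online_HST_embedding A \<longleftrightarrow>
     (\<forall>\<sigma>. is_HST_metric (alive \<sigma>) (A \<sigma>)) \<and>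
     (\<forall>\<sigma> x. \<forall>u\<in>alive \<sigma> \<inter> alive (\<sigma> @ [x]). \<forall>v\<in>alive \<sigma> \<inter> alive (\<sigma> @ [x]).
         A (\<sigma> @ [x]) u v = A \<sigma> u v)"

definition distortion_admissible ::
  "('a \<Rightarrow> 'a \<Rightarrow> real) \<Rightarrow> (('a \<times> bool) list \<Rightarrow> 'a \<Rightarrow> 'a \<Rightarrow> real) \<Rightarrow> ('a \<times> bool) list \<Rightarrow> real \<Rightarrow> bool" where
  "distortion_admissible d A \<sigma> lam \<longleftrightarrow>
     (\<exists>c>0. \<forall>t\<le>length \<sigma>. \<forall>u\<in>alive (take t \<sigma>). \<forall>v\<in>alive (take t \<sigma>).
        d u v \<le> c * A (take t \<sigma>) u v \<and> c * A (take t \<sigma>) u v \<le> lam * d u v)"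

text \<open>The distortion is the least admissible lambda (infinite if none exists).\<close>
definition distortion ::
  "('a \<Rightarrow> 'a \<Rightarrow> real) \<Rightarrow> (('a \<times> bool) list \<Rightarrow> 'a \<Rightarrow> 'a \<Rightarrow> real) \<Rightarrow> ('a \<times> bool) list \<Rightarrow> ereal" where
  "distortion d A \<sigma> = Inf {ereal lam | lam. distortion_admissible d A \<sigma> lam}"

end

theory Submission
  imports Defs
begin

lemma anc_trans: "tree_anc par a b \<Longrightarrow> tree_anc par b c \<Longrightarrow> tree_anc par a c"
  unfolding tree_anc_def by (metis funpow_add comp_apply)

lemma anc_chain: "tree_anc par u v \<Longrightarrow> tree_anc par u' v \<Longrightarrow> tree_anc par u u' \<or> tree_anc par u' u"
proof -
  assume "tree_anc par u v" "tree_anc par u' v"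
  then obtain k k' where k: "(par ^^ k) v = u" "(par ^^ k') v = u'" unfolding tree_anc_def by blast
  show ?thesis
  proof (cases "k \<le> k'")
    case True
    then have "(par ^^ (k' - k)) u = u'" using k by (metis funpow_add comp_apply le_add_diff_inverse2)
    then show ?thesis unfolding tree_anc_def by blast
  next
    case False
    then have "(par ^^ (k - k')) u' = u" using k by (metis funpow_add comp_apply le_add_diff_inverse2 nat_le_linear)
    then show ?thesis unfolding tree_anc_def by blast
  qed
qed

lemma par_closed: "rooted_tree V r par \<Longrightarrow> v \<in> V \<Longrightarrow> (par ^^ k) v \<in> V"
  by (induction k) (auto simp: rooted_tree_def)

lemma phi_mono:
  fixes \<phi> :: "nat \<Rightarrow> real" and \<mu> :: real and v :: nat
  assumes rt: "rooted_tree V r par" and mu: "\<mu> \<ge> 1"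
    and nn: "\<forall>v\<in>V. \<phi> v \<ge> 0"
    and ch: "\<forall>u w. tree_child V r par w u \<longrightarrow> \<phi> w \<le> \<phi> u / \<mu>"
  shows "v \<in> V \<Longrightarrow> \<phi> v \<le> \<phi> ((par ^^ k) v)"
proof (induction k arbitrary: v)
  case 0 then show ?case by simp
next
  case (Suc k)
  have pv: "par v \<in> V" using rt Suc.prems by (auto simp: rooted_tree_def)
  have eq: "(par ^^ Suc k) v = (par ^^ k) (par v)" by (simp add: funpow_Suc_right del: funpow.simps)
  show ?case
  proof (cases "v = r")
    case True
    then have "par v = v" using rt by (simp add: rooted_tree_def)
    then show ?thesis using eq Suc by simp
  next
    case False
    then have "tree_child V r par v (par v)" using Suc.prems by (simp add: tree_child_def)
    then have "\<phi> v \<le> \<phi> (par v) / \<mu>" using ch by blast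
    also have "\<dots> \<le> \<phi> (par v)" using nn pv mu
      by (simp add: divide_le_eq) (smt (verit, best) mult_le_cancel_left1)
    also have "\<dots> \<le> \<phi> ((par ^^ k) (par v))" using Suc.IH pv by blast
    finally show ?thesis using eq by simp
  qed
qed

lemma ultra:
  assumes "is_HST_metric L \<delta>" "x \<in> L" "y \<in> L" "z \<in> L"
  shows "\<delta> x z \<le> max (\<delta> x y) (\<delta> y z)"
proof -
  obtain \<mu> where mu: "\<mu> \<ge> 1" "is_mu_HST_metric \<mu> L \<delta>" using assms(1) unfolding is_HST_metric_def by blast
  have "L \<noteq> {}" using assms by blast
  then obtain V r par \<phi> leaf where rt: "rooted_tree V r par"
    and bij: "bij_betw leaf L {v. tree_leaf V r par v}"
    and nn: "\<forall>v\<in>V. \<phi> v \<ge> 0"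
    and ch: "\<forall>u w. tree_child V r par w u \<longrightarrow> \<phi> w \<le> \<phi> u / \<mu>"
    and lc: "\<forall>x\<in>L. \<forall>y\<in>L. \<exists>w. is_lca par (leaf x) (leaf y) w \<and> \<delta> x y = \<phi> w"
    using mu(2) unfolding is_mu_HST_metric_def by blast
  have lxV: "leaf x \<in> V" using bij assms(2) by (auto simp: bij_betw_def tree_leaf_def)
  obtain w1 where w1: "is_lca par (leaf x) (leaf y) w1" "\<delta> x y = \<phi> w1" using lc assms by blast
  obtain w2 where w2: "is_lca par (leaf y) (leaf z) w2" "\<delta> y z = \<phi> w2" using lc assms by blast
  obtain w where w: "is_lca par (leaf x) (leaf z) w" "\<delta> x z = \<phi> w" using lc assms by blast
  have wV: "w \<in> V" using w(1) lxV par_closed[OF rt] unfolding is_lca_def tree_anc_def by blast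
  have mono: "\<And>u. tree_anc par u w \<Longrightarrow> \<phi> w \<le> \<phi> u"
    using phi_mono[OF rt mu(1) nn ch wV] unfolding tree_anc_def by blast
  have "tree_anc par w1 (leaf y)" "tree_anc par w2 (leaf y)" using w1 w2 by (auto simp: is_lca_def)
  then consider "tree_anc par w1 w2" | "tree_anc par w2 w1" using anc_chain by blast
  then show ?thesis
  proof cases
    case 1
    then have "tree_anc par w1 (leaf z)" using w2 anc_trans by (auto simp: is_lca_def)
    then have "tree_anc par w1 w" using w1 w by (auto simp: is_lca_def)
    then show ?thesis using mono[of w1] w1 w by (simp add: le_max_iff_disj)
  next
    case 2
    then have "tree_anc par w2 (leaf x)" using w1 anc_trans by (auto simp: is_lca_def)
    then have "tree_anc par w2 w" using w2 w by (auto simp: is_lca_def)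
    then show ?thesis using mono[of w2] w2 w by (simp add: le_max_iff_disj)
  qed
qed


lemma alive_snoc: "alive (s @ [(v, b)]) = (if b then insert v (alive s) else alive s - {v})"
  by (simp add: alive_def)

lemma take2_app: "take 2 s = [x, y] \<Longrightarrow> take 2 (s @ xs) = [x, y]"
proof -
  assume h: "take 2 s = [x, y]"
  then have "length (take 2 s) = 2" by simp
  then have "length s \<ge> 2" by simp
  then show ?thesis using h by simp
qed

lemma all_prefix_snoc:
  "(\<forall>t\<le>length (s @ [x]). P (take t (s @ [x]))) \<longleftrightarrow> (\<forall>t\<le>length s. P (take t s)) \<and> P (s @ [x])"
  by (auto simp: le_Suc_eq)

lemma dep_snoc:
  "(\<forall>t<length (s @ [x]). \<not> snd ((s @ [x]) ! t) \<longrightarrow> fst ((s @ [x]) ! t) \<in> alive (take t (s @ [x])))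
   \<longleftrightarrow> (\<forall>t<length s. \<not> snd (s ! t) \<longrightarrow> fst (s ! t) \<in> alive (take t s)) \<and> (\<not> snd x \<longrightarrow> fst x \<in> alive s)"
  by (auto simp: less_Suc_eq nth_append)

fun stp :: "((real \<times> bool) list \<Rightarrow> real \<Rightarrow> real \<Rightarrow> real) \<Rightarrow> nat \<Rightarrow> real \<times> real \<times> (real \<times> bool) list" where
  "stp A 0 = (0, 1, [(0, True), (1, True)])"
| "stp A (Suc k) = (case stp A k of (a, b, s) \<Rightarrow>
     (let m = (a + b) / 2; s' = s @ [(m, True)] in
       if A s' a b \<le> A s' a m then (a, m, s' @ [(b, False)]) else (m, b, s' @ [(a, False)])))"

lemma stp_inv:
  assumes emb: "strict_online_HST_embedding A" and st: "stp A k = (a, b, s)"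
  shows "a < b \<and> b - a = 1 / 2 ^ k \<and> alive s = {a, b} \<and>
    A [(0, True), (1, True)] 0 1 \<le> A s a b \<and>
    take 2 s = [(0, True), (1, True)] \<and>
    distinct (map fst (filter snd s)) \<and> length (filter snd s) = k + 2 \<and>
    (\<forall>t<length s. \<not> snd (s ! t) \<longrightarrow> fst (s ! t) \<in> alive (take t s)) \<and>
    (\<forall>x\<in>set (map fst (filter snd s)). x \<le> a \<or> b \<le> x) \<and>
    (\<forall>t\<le>length s. card (alive (take t s)) \<le> 3)"
  using st
proof (induction k arbitrary: a b s)
  case 0
  then have s: "s = [(0, True), (1, True)]" and ab: "a = 0" "b = 1" by auto
  have "\<forall>t\<le>length s. card (alive (take t s)) \<le> 3"
  proof (intro allI impI)
    fix t assume "t \<le> length s"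
    then have "t = 0 \<or> t = 1 \<or> t = 2" using s by auto
    then show "card (alive (take t s)) \<le> 3" using s by (auto simp: alive_def)
  qed
  moreover have "\<forall>t<length s. \<not> snd (s ! t) \<longrightarrow> fst (s ! t) \<in> alive (take t s)"
    using s by (auto simp: less_Suc_eq nth_Cons')
  ultimately show ?case using s ab by (auto simp: alive_def)
next
  case (Suc k)
  obtain a0 b0 s0 where st0: "stp A k = (a0, b0, s0)" by (metis prod_cases3)
  note IH = Suc.IH[OF st0]
  define m where "m = (a0 + b0) / 2"
  define s' where "s' = s0 @ [(m, True)]"
  have am: "a0 < m" "m < b0" using IH m_def by auto
  have al': "alive s' = {a0, b0, m}" using IH by (auto simp: s'_def alive_snoc)
  have hst: "is_HST_metric (alive s') (A s')" using emb by (simp add: strict_online_HST_embedding_def)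
  have strict: "\<And>s x u v. u \<in> alive s \<Longrightarrow> u \<in> alive (s @ [x]) \<Longrightarrow> v \<in> alive s \<Longrightarrow> v \<in> alive (s @ [x]) \<Longrightarrow>
      A (s @ [x]) u v = A s u v"
    using emb unfolding strict_online_HST_embedding_def by blast
  have Aab: "A s' a0 b0 = A s0 a0 b0" unfolding s'_def
    by (rule strict) (use IH in \<open>auto simp: alive_snoc\<close>)
  have ultra': "A s' a0 b0 \<le> max (A s' a0 m) (A s' m b0)"
    by (rule ultra[OF hst]) (auto simp: al')
  have tk: "take 2 s' = [(0, True), (1, True)]" using IH unfolding s'_def by (intro take2_app) simp
  have prefix_s': "\<forall>t\<le>length s'. card (alive (take t s')) \<le> 3"
  proof -
    have "card (alive s') \<le> 3" unfolding al' by (auto simp: card_insert_if)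
    then show ?thesis using all_prefix_snoc[where P="\<lambda>l. card (alive l) \<le> 3" and s=s0 and x="(m, True)"] IH
      unfolding s'_def by simp
  qed
  have dep_s': "\<forall>t<length s'. \<not> snd (s' ! t) \<longrightarrow> fst (s' ! t) \<in> alive (take t s')"
    unfolding s'_def dep_snoc using IH by simp
  have arr': "map fst (filter snd s') = map fst (filter snd s0) @ [m]" by (simp add: s'_def)
  have mnot: "m \<notin> set (map fst (filter snd s0))" using IH am by force
  show ?case
  proof (cases "A s' a0 b0 \<le> A s' a0 m")
    case True
    then have ev: "a = a0" "b = m" "s = s' @ [(b0, False)]"
      using Suc.prems st0 by (auto simp: m_def s'_def Let_def)
    have als: "alive s = {a0, m}" using ev al' am by (auto simp: alive_snoc)
    have "A s a0 m = A s' a0 m" unfolding ev(3)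
      by (rule strict) (use al' am in \<open>auto simp: alive_snoc\<close>)
    then have mono: "A [(0, True), (1, True)] 0 1 \<le> A s a b" using IH True Aab ev by simp
    have "take 2 s = [(0, True), (1, True)]" unfolding ev(3) by (rule take2_app[OF tk])
    moreover have "\<forall>t\<le>length s. card (alive (take t s)) \<le> 3"
    proof -
      have "card (alive s) \<le> 3" unfolding als by (auto simp: card_insert_if)
      then show ?thesis using all_prefix_snoc[where P="\<lambda>l. card (alive l) \<le> 3" and s=s'] prefix_s'
        unfolding ev(3) by simp
    qed
    moreover have "\<forall>t<length s. \<not> snd (s ! t) \<longrightarrow> fst (s ! t) \<in> alive (take t s)"
      unfolding ev(3) dep_snoc using dep_s' al' by simp
    moreover have "b - a = 1 / 2 ^ Suc k"
    proof -
      have "b - a = (b0 - a0) / 2" using ev m_def by (simp add: field_simps)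
      then show ?thesis using IH by simp
    qed
    moreover have "\<forall>x\<in>set (map fst (filter snd s)). x \<le> a \<or> b \<le> x"
      using IH ev arr' am by (auto simp: s'_def)
    ultimately show ?thesis using IH ev als mono am arr' mnot by (simp add: s'_def)
  next
    case False
    then have ev: "a = m" "b = b0" "s = s' @ [(a0, False)]"
      using Suc.prems st0 by (auto simp: m_def s'_def Let_def)
    have als: "alive s = {m, b0}" using ev al' am by (auto simp: alive_snoc)
    have "A s m b0 = A s' m b0" unfolding ev(3)
      by (rule strict) (use al' am in \<open>auto simp: alive_snoc\<close>)
    then have mono: "A [(0, True), (1, True)] 0 1 \<le> A s a b" using IH False Aab ev ultra' by (simp add: max_def split: if_splits)
    have "take 2 s = [(0, True), (1, True)]" unfolding ev(3) by (rule take2_app[OF tk])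
    moreover have "\<forall>t\<le>length s. card (alive (take t s)) \<le> 3"
    proof -
      have "card (alive s) \<le> 3" unfolding als by (auto simp: card_insert_if)
      then show ?thesis using all_prefix_snoc[where P="\<lambda>l. card (alive l) \<le> 3" and s=s'] prefix_s'
        unfolding ev(3) by simp
    qed
    moreover have "\<forall>t<length s. \<not> snd (s ! t) \<longrightarrow> fst (s ! t) \<in> alive (take t s)"
      unfolding ev(3) dep_snoc using dep_s' al' by simp
    moreover have "b - a = 1 / 2 ^ Suc k"
    proof -
      have "b - a = (b0 - a0) / 2" using ev m_def by (simp add: field_simps)
      then show ?thesis using IH by simp
    qed
    moreover have "\<forall>x\<in>set (map fst (filter snd s)). x \<le> a \<or> b \<le> x"
      using IH ev arr' am by (auto simp: s'_def)
    ultimately show ?thesis using IH ev als mono am arr' mnot by (simp add: s'_def)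
  qed
qed


theorem mainTheorem20:
  fixes n :: nat
  assumes "n \<ge> 2"
  shows "\<exists>d :: real \<Rightarrow> real \<Rightarrow> real. is_metric d \<and>
           (\<forall>A. strict_online_HST_embedding A \<longrightarrow>
              (\<exists>\<sigma>. n_points_arrive \<sigma> n \<and> width \<sigma> \<le> 3 \<and>
                    distortion d A \<sigma> \<ge> ereal (2 ^ (n - 2))))"
proof -
  let ?d = "\<lambda>x y :: real. \<bar>x - y\<bar>"
  show ?thesis
  proof (rule exI[of _ ?d], intro conjI allI impI)
  show "is_metric ?d" unfolding is_metric_def by auto
  fix A :: "(real \<times> bool) list \<Rightarrow> real \<Rightarrow> real \<Rightarrow> real"
  assume emb: "strict_online_HST_embedding A"
  define k where "k = n - 2"
  have nk: "n = k + 2" using assms k_def by simp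
  obtain a b s where st: "stp A k = (a, b, s)" by (metis prod_cases3)
  note I = stp_inv[OF emb st]
  show "\<exists>\<sigma>. n_points_arrive \<sigma> n \<and> width \<sigma> \<le> 3 \<and> distortion ?d A \<sigma> \<ge> ereal (2 ^ (n - 2))"
  proof (intro exI conjI)
    show "n_points_arrive s n" unfolding n_points_arrive_def using I nk by simp
    have fin: "finite {card (alive (take t s)) | t. t \<le> length s}" by simp
    show "width s \<le> 3" unfolding width_def
      using I by (subst Max_le_iff[OF fin]) auto
    show "distortion ?d A s \<ge> ereal (2 ^ (n - 2))" unfolding distortion_def
    proof (rule Inf_greatest, clarify)
      fix lam assume "distortion_admissible ?d A s lam"
      then obtain c where c: "c > 0" and H: "\<forall>t\<le>length s. \<forall>u\<in>alive (take t s). \<forall>v\<in>alive (take t s).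
        ?d u v \<le> c * A (take t s) u v \<and> c * A (take t s) u v \<le> lam * ?d u v"
        unfolding distortion_admissible_def by blast
      have "length (take 2 s) = 2" using I by simp
      then have l2: "length s \<ge> 2" by simp
      have al2: "alive (take 2 s) = {0, 1}" using I by (auto simp: alive_def)
      have h1: "1 \<le> c * A [(0, True), (1, True)] 0 1" using H[rule_format, OF l2, of 0 1] al2 I by simp
      have h2: "c * A s a b \<le> lam * (b - a)" using H[rule_format, of "length s" a b] I by simp
      have "1 \<le> c * A s a b" using h1 I c by (smt (verit) mult_left_mono)
      moreover have ba: "b - a = 1 / 2 ^ k" using I by simp
      moreover have "c * A s a b \<le> lam / 2 ^ k" using h2 ba by simp
      ultimately have "1 \<le> lam / 2 ^ k" by linarith
      then have "2 ^ k \<le> lam" by (simp add: le_divide_eq)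
      then show "ereal (2 ^ (n - 2)) \<le> ereal lam" using k_def by simp
    qed
  qed
qed
qed

end
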